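(* Let $\Delta x>0$, $\Delta t>0$ and $\lambda\in\mathbb{R}$, and let $(u_{i,j})_{(i,j)\in\mathbb{Z}^2}$ be an arbitrary real-valued grid function. Define $$\varphi_{-1,0}=\tfrac{1}{3}\,(\mu_n u_{-1,0}^2)\,(\mu_n u_{-1,0})+\mu_nD_m^2 u_{-2,0}+\lambda\,\Delta x^2\,D_mD_n\mu_m u_{-2,0},$$ and for $(i,j)\in\mathbb{Z}^2$ let $\varphi_{i,j}=S_m^{\,i+1}S_n^{\,j}\varphi_{-1,0}$ (so that, e.g., $\varphi_{0,0}=S_m\varphi_{-1,0}$). Let the scheme $\mathrm{EC}(\lambda)$ be $$\widetilde{\mathcal{A}}\equiv D_m(\widetilde{F_1})+D_n(\widetilde{G_1})=0,\qquad \widetilde{F_1}=\mu_m\varphi_{-1,0},\qquad \widetilde{G_1}=u_{0,0},$$ and define $$\widetilde{\mathcal{Q}}_3=\varphi_{0,0},\qquad \widetilde{G_3}=\tfrac{1}{12}u_{0,0}^4+\tfrac{1}{2}\,u_{0,0}\,(D_m^2u_{-1,0}),$$ $$\widetilde{F_3}=\tfrac{1}{2}\Big(\varphi_{-1,0}\varphi_{0,0}+(D_m\mu_nu_{-1,0})(D_n\mu_mu_{-1,0})-(\mu_m\mu_nu_{-1,0})(D_mD_nu_{-1,0})+\lambda\,\Delta x^2\,(D_nu_{0,0})(D_nu_{-1,0})\Big).$$ Then the identity $$\widetilde{\mathcal{Q}}_3\,\widetilde{\mathcal{A}}=D_m(\widetilde{F_3})+D_n(\widetilde{G_3})$$ holds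 for every grid function $u$. Consequently, every solution of the scheme $\mathrm{EC}(\lambda)$ satisfies both the discrete mass conservation law $D_m(\widetilde{F_1})+D_n(\widetilde{G_1})=0$ and the discrete energy conservation law $D_m(\widetilde{F_3})+D_n(\widetilde{G_3})=0$ (at every lattice point).
   Context: The scheme $\mathrm{EC}(\lambda)$ is a finite difference discretization, on a uniform grid with spacings $\Delta x,\Delta t$, of the modified Korteweg–de Vries equation $u_t+u^2u_x+u_{xxx}=0$, whose mass and energy conservation laws are $D_t(u)+D_x(\tfrac13u^3+u_{xx})=0$ and $D_t(\tfrac{1}{12}u^4+\tfrac12uu_{xx})+D_x\big(\tfrac12(\tfrac13u^3+u_{xx})^2+u_xu_t-uu_{xt}\big)=0$. Here $u_{i,j}$ approximates $u(x_0+i\Delta x,t_0+j\Delta t)$; all expressions are written relative to a generic lattice point $(0,0)$, and the forward shift operators act on any expression by shifting indices: $S_m u_{i,j}=u_{i+1,j}$, $S_n u_{i,j}=u_{i,j+1}$ (applied to all grid values appearing in the expression). With $I$ the identity, the forward differences and forward averages are $D_m=\tfrac{1}{\Delta x}(S_m-I)$, $D_n=\tfrac{1}{\Delta t}(S_n-I)$, $\mu_m=\tfrac12(S_m+I)$, $\mu_n=\tfrac12(S_n+I)$; e.g. $\mu_n u_{-1,0}^2=\tfrac12(u_{-1,0}^2+u_{-1,1}^2)$ and $D_m^2u_{-2,0}=(u_{0,0}-2u_{-1,0}+u_{-2,0})/\Delta x^2$. Products of operators denote composition, and operators act on the immediately following factor only. *)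

theory Defs
  imports Complex_Main
begin

text \<open>A lattice expression is represented by its values at all base points:
  E i j is the value of the expression written relative to (0,0), evaluated
  with base point (i,j).\<close>

type_synonym gridfn = "int \<Rightarrow> int \<Rightarrow> real"

definition Sm :: "gridfn \<Rightarrow> gridfn" where "Sm E = (\<lambda>i j. E (i + 1) j)"
definition Sn :: "gridfn \<Rightarrow> gridfn" where "Sn E = (\<lambda>i j. E i (j + 1))"
definition Dm :: "real \<Rightarrow> gridfn \<Rightarrow> gridfn" where "Dm dx E = (\<lambda>i j. (Sm E i j - E i j) / dx)"
definition Dn :: "real \<Rightarrow> gridfn \<Rightarrow> gridfn" where "Dn dt E = (\<lambda>i j. (Sn E i j - E i j) / dt)"
definition mum :: "gridfn \<Rightarrow> gridfn" where "mum E = (\<lambda>i j. (Sm E i j + E i j) / 2)"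
definition mun :: "gridfn \<Rightarrow> gridfn" where "mun E = (\<lambda>i j. (Sn E i j + E i j) / 2)"

definition gv :: "gridfn \<Rightarrow> int \<Rightarrow> int \<Rightarrow> gridfn" where "gv u a b = (\<lambda>i j. u (i + a) (j + b))"

definition phi_m10 :: "real \<Rightarrow> real \<Rightarrow> real \<Rightarrow> gridfn \<Rightarrow> gridfn" where
  "phi_m10 dx dt lam u = (\<lambda>i j.
     (1/3) * mun (\<lambda>i j. (gv u (-1) 0 i j)^2) i j * mun (gv u (-1) 0) i j
     + mun (Dm dx (Dm dx (gv u (-2) 0))) i j
     + lam * dx^2 * Dm dx (Dn dt (mum (gv u (-2) 0))) i j)"

definition phi_00 :: "real \<Rightarrow> real \<Rightarrow> real \<Rightarrow> gridfn \<Rightarrow> gridfn" where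
  "phi_00 dx dt lam u = Sm (phi_m10 dx dt lam u)"

definition F1 :: "real \<Rightarrow> real \<Rightarrow> real \<Rightarrow> gridfn \<Rightarrow> gridfn" where
  "F1 dx dt lam u = mum (phi_m10 dx dt lam u)"
definition G1 :: "gridfn \<Rightarrow> gridfn" where
  "G1 u = gv u 0 0"

definition schemeA :: "real \<Rightarrow> real \<Rightarrow> real \<Rightarrow> gridfn \<Rightarrow> gridfn" where
  "schemeA dx dt lam u = (\<lambda>i j. Dm dx (F1 dx dt lam u) i j + Dn dt (G1 u) i j)"

definition Q3 :: "real \<Rightarrow> real \<Rightarrow> real \<Rightarrow> gridfn \<Rightarrow> gridfn" where
  "Q3 dx dt lam u = phi_00 dx dt lam u"

definition G3 :: "real \<Rightarrow> gridfn \<Rightarrow> gridfn" where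
  "G3 dx u = (\<lambda>i j. (1/12) * (gv u 0 0 i j)^4 + (1/2) * gv u 0 0 i j * Dm dx (Dm dx (gv u (-1) 0)) i j)"

definition F3 :: "real \<Rightarrow> real \<Rightarrow> real \<Rightarrow> gridfn \<Rightarrow> gridfn" where
  "F3 dx dt lam u = (\<lambda>i j. (1/2) *
     ( phi_m10 dx dt lam u i j * phi_00 dx dt lam u i j
     + Dm dx (mun (gv u (-1) 0)) i j * Dn dt (mum (gv u (-1) 0)) i j
     - mum (mun (gv u (-1) 0)) i j * Dm dx (Dn dt (gv u (-1) 0)) i j
     + lam * dx^2 * Dn dt (gv u 0 0) i j * Dn dt (gv u (-1) 0) i j))"

end

theory Submission
  imports Defs
begin

lemma alg:
  fixes dx dt lam P0 P1 P2 am a0 a1 bm b0 b1 :: real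
  assumes "dx \<noteq> 0" "dt \<noteq> 0"
  and P1: "P1 = (b0\<^sup>2 + a0\<^sup>2) * (b0 + a0) / 12 + (((b1 - b0)/dx - (b0 - bm)/dx)/dx + ((a1 - a0)/dx - (a0 - am)/dx)/dx)/2
     + lam * dx\<^sup>2 * (((b1 + b0) / 2 - (a1 + a0) / 2) / dt - ((b0 + bm) / 2 - (a0 + am) / 2) / dt) / dx"
  shows "P1 *
    (((P2 + P1) / 2 -
      (P1 + P0) / 2) /
     dx +
     (b0 - a0) / dt) =
    ((P1 * P2 +
      ((b1 + a1) / 2 - (b0 + a0) / 2) *
      ((b1 + b0) / 2 - (a1 + a0) / 2) /
      (dx * dt) -
      ((b1 + a1) / 2 + (b0 + a0) / 2) *
      ((b1 - a1) / dt - (b0 - a0) / dt) /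
      (2 * dx) +
      lam * dx\<^sup>2 * (b1 - a1) * (b0 - a0) / (dt * dt)) /
     2 -
     (P0 * P1 +
      ((b0 + a0) / 2 - (bm + am) / 2) *
      ((b0 + bm) / 2 - (a0 + am) / 2) /
      (dx * dt) -
      ((b0 + a0) / 2 + (bm + am) / 2) *
      ((b0 - a0) / dt - (bm - am) / dt) /
      (2 * dx) +
      lam * dx\<^sup>2 * (b0 - a0) * (bm - am) / (dt * dt)) /
     2) /
    dx +
    (b0 ^ 4 / 12 +
     b0 * ((b1 - b0) / dx - (b0 - bm) / dx) / (2 * dx) -
     (a0 ^ 4 / 12 +
      a0 * ((a1 - a0) / dx - (a0 - am) / dx) /
      (2 * dx))) /
    dt"
proof -
  have e: "P1 * (((P2 + P1) / 2 - (P1 + P0) / 2) / dx + (b0 - a0) / dt)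
     = (P1 * P2 - P0 * P1) / 2 / dx + P1 * (b0 - a0) / dt"
    using assms(1,2) by (simp add: field_simps)
  have r: "P1 * (b0 - a0) / dt = ((((b1 + a1) / 2 - (b0 + a0) / 2) *
      ((b1 + b0) / 2 - (a1 + a0) / 2) /
      (dx * dt) -
      ((b1 + a1) / 2 + (b0 + a0) / 2) *
      ((b1 - a1) / dt - (b0 - a0) / dt) /
      (2 * dx) +
      lam * dx\<^sup>2 * (b1 - a1) * (b0 - a0) / (dt * dt)) /
     2 -
     (((b0 + a0) / 2 - (bm + am) / 2) *
      ((b0 + bm) / 2 - (a0 + am) / 2) /
      (dx * dt) -
      ((b0 + a0) / 2 + (bm + am) / 2) *
      ((b0 - a0) / dt - (bm - am) / dt) /
      (2 * dx) +
      lam * dx\<^sup>2 * (b0 - a0) * (bm - am) / (dt * dt)) /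
     2) /
    dx +
    (b0 ^ 4 / 12 +
     b0 * ((b1 - b0) / dx - (b0 - bm) / dx) / (2 * dx) -
     (a0 ^ 4 / 12 +
      a0 * ((a1 - a0) / dx - (a0 - am) / dx) /
      (2 * dx))) /
    dt"
    using assms(1,2) unfolding P1
    apply (simp add: field_simps)
    apply (simp add: algebra_simps power2_eq_square power4_eq_xxxx)
    done
  show ?thesis unfolding e r using assms(1,2) by (simp add: field_simps)
qed

lemma key:
  fixes dx dt lam :: real and u :: gridfn
  assumes "dx \<noteq> 0" "dt \<noteq> 0"
  shows "Q3 dx dt lam u i j * schemeA dx dt lam u i j
                 = Dm dx (F3 dx dt lam u) i j + Dn dt (G3 dx u) i j"
  apply (simp add: Q3_def schemeA_def F3_def G3_def F1_def G1_def phi_00_def 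
      Sm_def Sn_def Dm_def Dn_def mum_def mun_def gv_def)
  apply (rule alg[OF assms])
  apply (simp add: phi_m10_def Sm_def Sn_def Dm_def Dn_def mum_def mun_def gv_def algebra_simps)
  apply (simp add: field_simps power2_eq_square)
  done

theorem mainTheorem1:
  fixes dx dt lam :: real and u :: gridfn
  assumes "dx > 0" and "dt > 0"
  shows "(\<forall>i j. Q3 dx dt lam u i j * schemeA dx dt lam u i j
                 = Dm dx (F3 dx dt lam u) i j + Dn dt (G3 dx u) i j)
       \<and> ((\<forall>i j. schemeA dx dt lam u i j = 0) \<longrightarrow>
            (\<forall>i j. Dm dx (F1 dx dt lam u) i j + Dn dt (G1 u) i j = 0)
          \<and> (\<forall>i j. Dm dx (F3 dx dt lam u) i j + Dn dt (G3 dx u) i j = 0))"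
proof -
  have K: "\<And>i j. Q3 dx dt lam u i j * schemeA dx dt lam u i j
                 = Dm dx (F3 dx dt lam u) i j + Dn dt (G3 dx u) i j"
    using key assms by simp
  show ?thesis
    by (metis K mult_zero_right schemeA_def)
qed

end
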